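(* If an $n$-Brinkhuis $(k_0,k_1,k_2)$-triple exists, then $s\ge k^{1/(n-1)}$, where $k=\min(k_0,k_1,k_2)$.
   Context: Let $\Sigma=\{0,1,2\}$. A word over $\Sigma$ is square-free if it cannot be written as $xyyz$ with $y$ nonempty. $\mathcal{A}(n)$ is the set of square-free words of length $n$, $a(n)=|\mathcal{A}(n)|$, and $s=\lim_{n\to\infty}a(n)^{1/n}$ (this limit exists). An $n$-Brinkhuis $(k_0,k_1,k_2)$-triple, where $k_0,k_1,k_2\ge1$, consists of three sets $\mathcal{B}^{(i)}=\{w^{(i)}_j: 1\le j\le k_i\}\subset\mathcal{A}(n)$ for $i\in\{0,1,2\}$. Each $\mathcal{B}^{(i)}$ has $k_i$ distinct square-free words of length $n$. The defining condition: for every square-free word $ii'i''\in\mathcal{A}(3)$ and all $1\le j\le k_i$, $1\le j'\le k_{i'}$, $1\le j''\le k_{i''}$, the concatenation $w^{(i)}_jw^{(i')}_{j'}w^{(i'')}_{j''}$ is square-free. *)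

theory Defs
  imports Complex_Main
begin

definition square_free :: "nat list \<Rightarrow> bool" where
  "square_free w \<longleftrightarrow> \<not> (\<exists>x y z. y \<noteq> [] \<and> w = x @ y @ y @ z)"

definition sqfree_words :: "nat \<Rightarrow> nat list set" where
  "sqfree_words n = {w. length w = n \<and> set w \<subseteq> {0,1,2} \<and> square_free w}"

definition a_count :: "nat \<Rightarrow> nat" where
  "a_count n = card (sqfree_words n)"

definition growth_s :: real where
  "growth_s = lim (\<lambda>n. real (a_count n) powr (1 / real n))"

definition brinkhuis_triple :: "nat \<Rightarrow> (nat \<Rightarrow> nat) \<Rightarrow> (nat \<Rightarrow> nat list set) \<Rightarrow> bool" where
  "brinkhuis_triple n k B \<longleftrightarrow>
     (\<forall>i<3. 1 \<le> k i \<and> B i \<subseteq> sqfree_words n \<and> card (B i) = k i) \<and>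
     (\<forall>i i' i''. [i, i', i''] \<in> sqfree_words 3 \<longrightarrow>
        (\<forall>u\<in>B i. \<forall>v\<in>B i'. \<forall>w\<in>B i''. square_free (u @ v @ w)))"

end

theory Submission
  imports Defs
begin

definition sq_at :: "nat list \<Rightarrow> nat \<Rightarrow> nat \<Rightarrow> bool" where
  "sq_at w p L \<longleftrightarrow> 0 < L \<and> p + 2*L \<le> length w \<and> (\<forall>q<L. w!(p+q) = w!(p+L+q))"

lemma sf_iff: "square_free w \<longleftrightarrow> \<not> (\<exists>p L. sq_at w p L)"
proof
  assume sf: "square_free w"
  show "\<not> (\<exists>p L. sq_at w p L)"
  proof
    assume "\<exists>p L. sq_at w p L"
    then obtain p L where s: "sq_at w p L" by blast
    define y where "y = take L (drop p w)"
    have len: "p + 2*L \<le> length w" and L0: "0 < L" and eq: "\<forall>q<L. w!(p+q) = w!(p+L+q)"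
      using s by (auto simp: sq_at_def)
    have y2: "take L (drop (p+L) w) = y"
      unfolding y_def by (rule nth_equalityI) (use len eq in auto)
    have d1: "drop p w = y @ drop (p+L) w" unfolding y_def
      by (metis append_take_drop_id drop_drop add.commute)
    have d2: "drop (p+L) w = take L (drop (p+L) w) @ drop (p+2*L) w"
      by (metis append_take_drop_id drop_drop add.commute mult_2 add.assoc)
    have "w = take p w @ y @ take L (drop (p+L) w) @ drop (p+2*L) w"
      by (metis append_take_drop_id d1 d2)
    then have "w = take p w @ y @ y @ drop (p+2*L) w" using y2 by simp
    moreover have "y \<noteq> []" using len L0 by (simp add: y_def)
    ultimately show False using sf unfolding square_free_def by blast
  qed
next
  assume ns: "\<not> (\<exists>p L. sq_at w p L)"
  show "square_free w" unfolding square_free_def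
  proof
    assume "\<exists>x y z. y \<noteq> [] \<and> w = x @ y @ y @ z"
    then obtain x y z where "y \<noteq> []" "w = x @ y @ y @ z" by blast
    then have "sq_at w (length x) (length y)"
      by (auto simp: sq_at_def nth_append)
    then show False using ns by blast
  qed
qed

lemma sq_at_restrict:
  assumes "sq_at W P L" "d \<le> P" "P + 2*L \<le> d + length V" "\<And>i. i < length V \<Longrightarrow> V!i = W!(d+i)"
  shows "sq_at V (P - d) L"
proof -
  have L0: "0 < L" and eq: "\<And>q. q<L \<Longrightarrow> W!(P+q) = W!(P+L+q)" using assms(1) by (auto simp: sq_at_def)
  have "V ! (P - d + q) = V ! (P - d + L + q)" if "q < L" for q
  proof -
    have "V ! (P - d + q) = W!(d + (P - d + q))" using assms(2,3) that by (intro assms(4)) auto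
    also have "d + (P - d + q) = P + q" using assms(2) by simp
    also have "W!(P+q) = W!(P+L+q)" using eq that .
    also have "P + L + q = d + (P - d + L + q)" using assms(2) by simp
    also have "W!(d + (P - d + L + q)) = V ! (P - d + L + q)" using assms(2,3) that by (intro assms(4)[symmetric]) auto
    finally show ?thesis .
  qed
  then show ?thesis using L0 assms(2,3) by (auto simp: sq_at_def)
qed

lemma sf_restrict:
  assumes "square_free W" "d + length V \<le> length W" "\<And>i. i < length V \<Longrightarrow> V!i = W!(d+i)"
  shows "square_free V"
proof -
  { fix p L assume s: "sq_at V p L"
    have "sq_at W (d+p) L" using s assms(2,3) unfolding sq_at_def
      by (auto simp: add.assoc)
    then have False using assms(1) sf_iff by blast }
  then show ?thesis using sf_iff by blast
qed

lemma sf_take: "square_free W \<Longrightarrow> square_free (take k W)"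
  by (rule sf_restrict[where d=0]) auto

lemma sf_drop: "square_free W \<Longrightarrow> square_free (drop k W)"
proof (cases "k \<le> length W")
  case True
  assume "square_free W" then show ?thesis by (rule sf_restrict[where d=k]) (use True in auto)
next
  case False
  then show ?thesis by (simp add: sf_iff sq_at_def)
qed

lemma sf_exec: "square_free w \<longleftrightarrow>
  (\<forall>p\<in>{..<length w}. \<forall>L\<in>{1..(length w - p) div 2}. take L (drop p w) \<noteq> take L (drop (p+L) w))"
proof -
  have "sq_at w p L \<longleftrightarrow> p < length w \<and> 1 \<le> L \<and> L \<le> (length w - p) div 2 \<and> take L (drop p w) = take L (drop (p+L) w)" for p L
  proof
    assume s: "sq_at w p L"
    then have len: "p + 2*L \<le> length w" "0 < L" and eq: "\<forall>q<L. w!(p+q) = w!(p+L+q)"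
      by (auto simp: sq_at_def)
    have "take L (drop p w) = take L (drop (p+L) w)"
      by (rule nth_equalityI) (use len eq in auto)
    then show "p < length w \<and> 1 \<le> L \<and> L \<le> (length w - p) div 2 \<and> take L (drop p w) = take L (drop (p+L) w)"
      using len by auto
  next
    assume h: "p < length w \<and> 1 \<le> L \<and> L \<le> (length w - p) div 2 \<and> take L (drop p w) = take L (drop (p+L) w)"
    then have len: "p + 2*L \<le> length w" "0<L" by auto
    have "w!(p+q) = w!(p+L+q)" if "q<L" for q
    proof -
      have "take L (drop p w) ! q = take L (drop (p+L) w) ! q" using h by simp
      then show ?thesis using that len by simp
    qed
    then show "sq_at w p L" using len by (simp add: sq_at_def)
  qed
  then show ?thesis unfolding sf_iff by auto
qed

fun isp :: "nat list \<Rightarrow> nat list \<Rightarrow> bool" where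
  "isp [] ys = True"
| "isp (x#xs) [] = False"
| "isp (x#xs) (y#ys) = (x = y \<and> isp xs ys)"

lemma isp_iff: "isp a b \<longleftrightarrow> (\<exists>c. b = a @ c)"
  by (induction a b rule: isp.induct) auto

fun chk :: "nat list \<Rightarrow> nat list \<Rightarrow> bool" where
  "chk acc [] = True"
| "chk acc (x#xs) = (\<not> isp (acc@[x]) xs \<and> chk (acc@[x]) xs)"

fun sqf_rec :: "nat list \<Rightarrow> bool" where
  "sqf_rec [] = True"
| "sqf_rec (x#xs) = (chk [] (x#xs) \<and> sqf_rec xs)"

lemma chk_prop: "chk acc xs \<Longrightarrow> ys \<noteq> [] \<Longrightarrow> xs = ys @ rest \<Longrightarrow> \<not> isp (acc@ys) rest"
proof (induction acc xs arbitrary: ys rule: chk.induct)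
  case (1 acc) then show ?case by simp
next
  case (2 acc x xs)
  then obtain ys' where ys: "ys = x # ys'" by (cases ys) auto
  show ?case
  proof (cases "ys' = []")
    case True then show ?thesis using 2 ys by simp
  next
    case False
    then show ?thesis using 2(1)[of ys'] 2(2,4) ys by simp
  qed
qed

lemma sqf_rec_sound: "sqf_rec w \<Longrightarrow> square_free w"
  unfolding square_free_def
proof (induction w rule: sqf_rec.induct)
  case 1 then show ?case by simp
next
  case (2 a w)
  show ?case
  proof
    assume "\<exists>x y z. y \<noteq> [] \<and> a # w = x @ y @ y @ z"
    then obtain x y z where y: "y \<noteq> []" and e: "a # w = x @ y @ y @ z" by blast
    show False
    proof (cases x)
      case Nil
      have c: "chk [] (a#w)" using 2(2) by simp
      have "\<not> isp ([]@y) (y@z)" using chk_prop[OF c y] Nil e by simp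
      then show False by (simp add: isp_iff)
    next
      case (Cons b x')
      then have "w = x' @ y @ y @ z" using e by simp
      then show False using 2 y by auto
    qed
  qed
qed

definition leech :: "nat \<Rightarrow> nat list" where
  "leech i = (if i = 0 then [0,1,2,1,0,2,1,2,0,1,2,1,0] else if i = 1 then [1,2,0,2,1,0,2,0,1,2,0,2,1]
     else [2,0,1,0,2,1,0,1,2,0,1,0,2])"

lemma leech_check:
  "\<forall>i\<in>{0,1,2::nat}. \<forall>j\<in>{0,1,2::nat}. \<forall>l\<in>{0,1,2::nat}. i \<noteq> j \<longrightarrow> j \<noteq> l \<longrightarrow>
     sqf_rec (leech i @ leech j @ leech l)"
  by (simp add: leech_def)

lemma concat_len: "(\<forall>u\<in>set us. length u = n) \<Longrightarrow> length (concat us) = length us * n"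
  by (induction us) auto

lemma concat_nth: "(\<forall>u\<in>set us. length u = n) \<Longrightarrow> i < length us \<Longrightarrow> s < n \<Longrightarrow>
   concat us ! (i*n+s) = us!i!s"
proof (induction us arbitrary: i)
  case Nil then show ?case by simp
next
  case (Cons u us)
  show ?case
  proof (cases i)
    case 0 then show ?thesis using Cons by (simp add: nth_append)
  next
    case (Suc i')
    have "concat (u#us) ! (i*n+s) = concat us ! (i'*n+s)"
      using Cons.prems Suc by (simp add: nth_append add.assoc)
    then show ?thesis using Cons Suc by simp
  qed
qed

lemma sf3: "a < 3 \<Longrightarrow> b < 3 \<Longrightarrow> c < 3 \<Longrightarrow> a \<noteq> b \<Longrightarrow> b \<noteq> c \<Longrightarrow> [a,b,c] \<in> sqfree_words 3"
proof -
  assume h: "a < 3" "b < 3" "c < 3" "a \<noteq> b" "b \<noteq> c"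
  have "\<not> sq_at [a,b,c] p L" for p L
  proof
    assume s: "sq_at [a,b,c] p L"
    then have L: "L = 1" "p \<le> 1" unfolding sq_at_def by auto
    have "[a,b,c]!(p+0) = [a,b,c]!(p+L+0)" using s unfolding sq_at_def by blast
    then have "[a,b,c]!p = [a,b,c]!(p+1)" using L by simp
    then show False using h L(2) by (cases p) auto
  qed
  then show ?thesis using h by (auto simp: sqfree_words_def sf_iff)
qed

locale good =
  fixes n :: nat and B :: "nat \<Rightarrow> nat list set"
  assumes npos: "0 < n"
  and Bsub: "\<And>a. a < 3 \<Longrightarrow> B a \<subseteq> sqfree_words n"
  and Bne: "\<And>a. a < 3 \<Longrightarrow> B a \<noteq> {}"
  and T3: "\<And>a b c u v x. a<3 \<Longrightarrow> b<3 \<Longrightarrow> c<3 \<Longrightarrow> a\<noteq>b \<Longrightarrow> b\<noteq>c \<Longrightarrow> u\<in>B a \<Longrightarrow> v\<in>B b \<Longrightarrow> x\<in>B c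
      \<Longrightarrow> square_free (u@v@x)"
begin

lemma lenB: "a < 3 \<Longrightarrow> u \<in> B a \<Longrightarrow> length u = n"
  using Bsub by (auto simp: sqfree_words_def)

lemma sfB: "a < 3 \<Longrightarrow> u \<in> B a \<Longrightarrow> square_free u"
  using Bsub by (auto simp: sqfree_words_def)

lemma setB: "a < 3 \<Longrightarrow> u \<in> B a \<Longrightarrow> set u \<subseteq> {0,1,2}"
  using Bsub by (auto simp: sqfree_words_def)

lemma T2: assumes "a<3" "b<3" "a\<noteq>b" "u\<in>B a" "v\<in>B b" shows "square_free (u@v)"
proof -
  define c where "c = (if b = 0 then 1 else (0::nat))"
  have c: "c < 3" "b \<noteq> c" by (auto simp: c_def)
  obtain x where x: "x \<in> B c" using Bne[OF c(1)] by blast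
  have "square_free (u@v@x)" using T3[OF assms(1,2) c(1) assms(3) c(2) assms(4,5) x] .
  then have "square_free (take (length (u@v)) (u@v@x))" by (rule sf_take)
  then show ?thesis by simp
qed

lemma disj: assumes "a<3" "b<3" "u\<in>B a" "u\<in>B b" shows "a = b"
proof (rule ccontr)
  assume "a \<noteq> b"
  then have "square_free (u@u)" using T2 assms by blast
  moreover have "sq_at (u@u) 0 (length u)" using lenB[OF assms(1,3)] npos
    by (auto simp: sq_at_def nth_append)
  ultimately show False using sf_iff by blast
qed

end

lemma lt_c: "(a::nat)*n < b*n \<Longrightarrow> a < b" using mult_less_cancel2 by blast
lemma le_c: "(a::nat)*n \<le> b*n \<Longrightarrow> 0<n \<Longrightarrow> a \<le> b" using mult_le_cancel2 by blast

context good
begin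

lemma main:
  assumes sfw: "square_free w" and wl: "\<And>i. i < length w \<Longrightarrow> w!i < 3"
    and lus: "length us = length w" and usB: "\<And>i. i < length w \<Longrightarrow> us!i \<in> B (w!i)"
  shows "square_free (concat us)"
proof -
  define m where "m = length w"
  define U where "U = concat us"
  have allen: "\<forall>u\<in>set us. length u = n"
    using usB lenB wl lus by (metis in_set_conv_nth)
  have blk: "\<And>i s. i < m \<Longrightarrow> s < n \<Longrightarrow> U!(i*n+s) = us!i!s"
    unfolding U_def m_def using concat_nth[OF allen] lus by simp
  have lenU: "length U = m*n" unfolding U_def m_def using concat_len[OF allen] lus by simp
  have lusi: "\<And>i. i < m \<Longrightarrow> length (us!i) = n" using allen lus m_def by simp
  have wl': "\<And>i. i < m \<Longrightarrow> w!i < 3" using wl m_def by simp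
  have usB': "\<And>i. i < m \<Longrightarrow> us!i \<in> B (w!i)" using usB m_def by simp
  have adj: "\<And>i. i+1 < m \<Longrightarrow> w!i \<noteq> w!(i+1)"
  proof
    fix i assume "i+1 < m" "w!i = w!(i+1)"
    then have "sq_at w i 1" by (auto simp: sq_at_def m_def)
    then show False using sfw sf_iff by blast
  qed
  show ?thesis
  proof (cases "m \<le> 2")
    case True
    then consider "m = 0" | "m = 1" | "m = 2" by linarith
    then show ?thesis
    proof cases
      case 1 then show ?thesis using lus m_def by (simp add: sf_iff sq_at_def)
    next
      case 2
      then obtain u where "us = [u]" using lus m_def by (cases us) auto
      moreover have "square_free (us!0)" using sfB[of "w!0" "us!0"] wl'[of 0] usB'[of 0] 2 by simp
      ultimately show ?thesis by simp
    next
      case 3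
      then obtain u v where uv: "us = [u,v]" using lus m_def
        by (cases us; cases "tl us") auto
      have "square_free (us!0 @ us!1)"
        using T2[of "w!0" "w!1" "us!0" "us!1"] wl'[of 0] wl'[of 1] adj[of 0] usB'[of 0] usB'[of 1] 3
        by simp
      then show ?thesis using uv by simp
    qed
  next
    case False
    then have m3: "3 \<le> m" by simp
    show ?thesis unfolding U_def[symmetric] sf_iff
    proof
      assume "\<exists>p L. sq_at U p L"
      then obtain p L where sq: "sq_at U p L" by blast
      have L0: "0 < L" and pL: "p + 2*L \<le> m*n" and eq: "\<And>q. q < L \<Longrightarrow> U!(p+q) = U!(p+L+q)"
        using sq lenU by (auto simp: sq_at_def)
      have window: False if j3: "j+3 \<le> m" and jp: "j*n \<le> p" and pj: "p + 2*L \<le> (j+3)*n" for j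
      proof -
        define V where "V = us!j @ us!(j+1) @ us!(j+2)"
        have "square_free V" unfolding V_def
          using T3[of "w!j" "w!(j+1)" "w!(j+2)" "us!j" "us!(j+1)" "us!(j+2)"]
            wl'[of j] wl'[of "j+1"] wl'[of "j+2"] adj[of j] adj[of "j+1"] usB'[of j] usB'[of "j+1"] usB'[of "j+2"] j3
          by (simp add: add.assoc)
        have lenV: "length V = 3*n" using lusi j3 by (simp add: V_def)
        have Vi: "V!i = U!(j*n+i)" if iV: "i < length V" for i
        proof -
          consider "i < n" | "n \<le> i" "i < 2*n" | "2*n \<le> i" "i < 3*n" using iV lenV by linarith
          then show ?thesis
          proof cases
            case 1 then show ?thesis using blk[of j i] lusi j3 by (simp add: V_def nth_append)
          next
            case 2
            have "U!((j+1)*n + (i-n)) = us!(j+1)!(i-n)" by (rule blk) (use 2 j3 in auto)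
            moreover have "(j+1)*n + (i-n) = j*n+i" using 2 by (simp add: algebra_simps)
            moreover have "i - n < n" using 2 by simp
            ultimately show ?thesis using 2 lusi j3 by (simp add: V_def nth_append)
          next
            case 3
            have "U!((j+2)*n + (i-2*n)) = us!(j+2)!(i-2*n)" by (rule blk) (use 3 j3 in auto)
            moreover have "(j+2)*n + (i-2*n) = j*n+i" using 3 by (simp add: algebra_simps)
            moreover have "\<not> i - n < n" "i - n - n = i - 2*n" using 3 by auto
            ultimately show ?thesis using 3 lusi j3 by (simp add: V_def nth_append)
          qed
        qed
        have "sq_at V (p - j*n) L"
          by (rule sq_at_restrict[OF sq jp]) (use pj lenV Vi in \<open>auto simp: algebra_simps\<close>)
        then show False using \<open>square_free V\<close> sf_iff by blast
      qed
      have occ: "q mod n = 0" if c3: "c < 3" and u: "u \<in> B c" and qn: "q + n \<le> m*n"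
        and qs: "\<And>s. s < n \<Longrightarrow> U!(q+s) = u!s" for c u q
      proof (rule ccontr)
        assume o0: "q mod n \<noteq> 0"
        define i where "i = q div n"
        define r where "r = q mod n"
        have qir: "q = i*n + r" unfolding i_def r_def by simp
        have rn: "0 < r" "r < n" using o0 npos by (auto simp: r_def)
        have "(i+1)*n < m*n" using qn qir rn by (simp add: algebra_simps)
        then have i1: "i+1 < m" by (rule lt_c)
        have lu: "length u = n" using lenB[OF c3 u] .
        show False
        proof (cases "c = w!(i+1)")
          case False
          have "square_free (u @ us!(i+1))"
            using T2[of c "w!(i+1)" u "us!(i+1)"] c3 wl'[of "i+1"] False u usB'[of "i+1"] i1 by simp
          moreover have "sq_at (u @ us!(i+1)) (n-r) r"
            unfolding sq_at_def
          proof (intro conjI allI impI)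
            fix q' assume q': "q' < r"
            have lt: "n-r+q' < n" using q' rn by simp
            have "(u @ us!(i+1))!(n-r+q') = u!(n-r+q')" using lu lt by (simp add: nth_append)
            also have "... = U!(q + (n-r+q'))" using qs[OF lt] by simp
            also have "q + (n-r+q') = (i+1)*n + q'" using qir rn by (simp add: algebra_simps)
            also have "U!((i+1)*n + q') = us!(i+1)!q'" by (rule blk) (use i1 q' rn in auto)
            also have "... = (u @ us!(i+1))!(n-r+r+q')" using lu rn by (simp add: nth_append)
            finally show "(u @ us!(i+1))!(n-r+q') = (u @ us!(i+1))!(n-r+r+q')" .
          qed (use rn lu lusi i1 in auto)
          ultimately show False using sf_iff by blast
        next
          case True
          then have ci: "w!i \<noteq> c" using adj i1 by auto
          have "square_free (us!i @ u)"
            using T2[of "w!i" c "us!i" u] c3 wl'[of i] ci u usB'[of i] i1 by simp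
          moreover have "sq_at (us!i @ u) r (n-r)"
            unfolding sq_at_def
          proof (intro conjI allI impI)
            fix q' assume q': "q' < n-r"
            have li: "length (us!i) = n" using lusi i1 by simp
            have lt: "r+q' < n" using q' by simp
            have "(us!i @ u)!(r+q') = us!i!(r+q')" using li lt by (simp add: nth_append)
            also have "... = U!(i*n + (r+q'))" by (rule blk[symmetric]) (use i1 q' in auto)
            also have "i*n + (r+q') = q + q'" using qir by simp
            also have "U!(q+q') = u!q'" using qs q' by simp
            also have "... = (us!i @ u)!(r+(n-r)+q')" using li rn by (simp add: nth_append)
            finally show "(us!i @ u)!(r+q') = (us!i @ u)!(r+(n-r)+q')" .
          qed (use rn lu lusi i1 in auto)
          ultimately show False using sf_iff by blast
        qed
      qed
      define j where "j = p div n"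
      define r where "r = p mod n"
      have pjr: "p = j*n + r" unfolding j_def r_def by simp
      have rn: "r < n" using npos by (simp add: r_def)
      show False
      proof (cases "p + 2*L \<le> (j+3)*n")
        case True
        show False
        proof (cases "j + 3 \<le> m")
          case True
          then show False using window[of j] pjr \<open>p + 2*L \<le> (j+3)*n\<close> by simp
        next
          case False
          have "m - 3 \<le> j" using False by simp
          then have "(m-3)*n \<le> j*n" by (rule mult_le_mono1)
          then have mp: "(m-3)*n \<le> p" using pjr by linarith
          have mm: "m - 3 + 3 = m" using m3 by simp
          show False by (rule window[of "m-3"]) (use mm mp pL in auto)
        qed
      next
        case False
        then have B: "(j+3)*n < p + 2*L" by simp
        have Ln: "n < L" using B pjr rn by (simp add: algebra_simps)
        \<comment> \<open>a full block in one of the two halves\<close>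
        have dvdL: "n dvd L"
        proof -
          have first: "n dvd L" if k1: "p \<le> k*n" and k2: "k*n + n \<le> p + L" for k
          proof -
            have "(k+1)*n < m*n" using k2 pL L0 by (simp add: algebra_simps)
            then have "k+1 < m" by (rule lt_c)
            then have km: "k < m" by simp
            have "(k*n + L) mod n = 0"
            proof (rule occ[of "w!k" "us!k"])
              show "w!k < 3" using wl' km by simp
              show "us!k \<in> B (w!k)" using usB' km by simp
              show "k*n + L + n \<le> m*n" using k2 pL by simp
              fix s assume s: "s < n"
              have "U!(p + (k*n+s-p)) = U!(p+L+(k*n+s-p))" by (rule eq) (use k1 k2 s in simp)
              then have "U!(k*n+s) = U!(k*n+L+s)" using k1 by (simp add: algebra_simps)
              then show "U!(k*n+L+s) = us!k!s" using blk[of k s] km s by simp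
            qed
            then have "L mod n = 0" by simp
            then show ?thesis by (rule mod_0_imp_dvd)
          qed
          have second: "n dvd L" if k1: "p + L \<le> k*n" and k2: "k*n + n \<le> p + 2*L" for k
          proof -
            have "(k+1)*n \<le> m*n" using k2 pL by (simp add: algebra_simps)
            then have "k+1 \<le> m" using npos by (rule le_c)
            then have km: "k < m" by simp
            have "(k*n - L) mod n = 0"
            proof (rule occ[of "w!k" "us!k"])
              show "w!k < 3" using wl' km by simp
              show "us!k \<in> B (w!k)" using usB' km by simp
              show "k*n - L + n \<le> m*n" using k1 k2 pL by simp
              fix s assume s: "s < n"
              have "U!(p + (k*n-L+s-p)) = U!(p+L+(k*n-L+s-p))" by (rule eq) (use k1 k2 s in simp)
              then have "U!(k*n-L+s) = U!(k*n+s)" using k1 by simp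
              then show "U!(k*n-L+s) = us!k!s" using blk[of k s] km s by simp
            qed
            then have nd: "n dvd (k*n - L)" by (rule mod_0_imp_dvd)
            have "n dvd (k*n - (k*n - L))" by (rule dvd_diff_nat[OF _ nd]) simp
            moreover have "k*n - (k*n - L) = L" using k1 by simp
            ultimately show ?thesis by simp
          qed
          consider "r = 0" | "0 < r" "j*n + 2*n \<le> p + L" | "0 < r" "p + L < j*n + 2*n" by linarith
          then show ?thesis
          proof cases
            case 1 then show ?thesis using first[of j] pjr Ln by simp
          next
            case 2 then show ?thesis using first[of "j+1"] pjr rn by (simp add: algebra_simps)
          next
            case 3 then show ?thesis using second[of "j+2"] pjr rn B by (simp add: algebra_simps)
          qed
        qed
        then obtain t where Lt: "L = t*n" by (metis dvd_def mult.commute)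
        have t1: "1 \<le> t" using L0 Lt by (cases t) auto
        have beq: "w!i = w!(i+t) \<and> us!i = us!(i+t)" if i1: "p \<le> i*n" and i2: "i*n + n \<le> p + L" for i
        proof -
          have "(i+t+1)*n \<le> m*n" using i2 pL Lt by (simp add: algebra_simps)
          then have "i+t+1 \<le> m" using npos by (rule le_c)
          then have im: "i + t < m" by simp
          have e: "us!i = us!(i+t)"
          proof (rule nth_equalityI)
            show "length (us!i) = length (us!(i+t))" using lusi im by simp
            fix s assume "s < length (us!i)"
            then have s: "s < n" using lusi im by simp
            have "U!(p + (i*n+s-p)) = U!(p+L+(i*n+s-p))" by (rule eq) (use i1 i2 s in simp)
            then have "U!(i*n+s) = U!((i+t)*n+s)" using i1 Lt by (simp add: algebra_simps)
            then show "us!i!s = us!(i+t)!s" using blk[of i s] blk[of "i+t" s] im s by simp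
          qed
          have "w!i = w!(i+t)"
            using disj[of "w!i" "w!(i+t)" "us!i"] wl'[of i] wl'[of "i+t"] usB'[of i] usB'[of "i+t"] im e by simp
          with e show ?thesis by simp
        qed
        show False
        proof (cases "r = 0")
          case True
          have "sq_at w j t" unfolding sq_at_def
          proof (intro conjI allI impI)
            show "0 < t" using t1 by simp
            have "(j+2*t)*n \<le> m*n" using pL pjr True Lt by (simp add: algebra_simps)
            then have "j + 2*t \<le> m" using npos by (rule le_c)
            then show "j + 2*t \<le> length w" using m_def by simp
            fix q assume q: "q < t"
            have "(q+1)*n \<le> t*n" using q by (intro mult_le_mono1) simp
            then have "p \<le> (j+q)*n" "(j+q)*n + n \<le> p + L" using pjr True Lt
              by (simp_all add: algebra_simps)
            then have "w!(j+q) = w!(j+q+t)" using beq[of "j+q"] by blast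
            then show "w!(j+q) = w!(j+t+q)" by (simp add: algebra_simps)
          qed
          then show False using sfw sf_iff by blast
        next
          case False
          then have r0: "0 < r" by simp
          have "(j+2*t)*n < m*n" using pL pjr r0 Lt by (simp add: algebra_simps)
          then have j2t: "j + 2*t < m" by (rule lt_c)
          have mid: "w!(j+i) = w!(j+i+t)" if "1 \<le> i" "i < t" for i
          proof -
            have "1*n \<le> i*n" using that by (intro mult_le_mono1) simp
            then have "j*n + n \<le> (j+i)*n" by (simp add: algebra_simps)
            moreover have "(i+1)*n \<le> t*n" using that by (intro mult_le_mono1) simp
            then have "(j+i)*n + n \<le> j*n + t*n" by (simp add: algebra_simps)
            ultimately have "p \<le> (j+i)*n" "(j+i)*n + n \<le> p + L" using pjr rn Lt by linarith+
            then show ?thesis using beq[of "j+i"] by (simp add: add.assoc)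
          qed
          have suf: "us!j!s = us!(j+t)!s" if "r \<le> s" "s < n" for s
          proof -
            have "U!(p + (s-r)) = U!(p+L+(s-r))" by (rule eq) (use that Ln in simp)
            then have "U!(j*n+s) = U!((j+t)*n+s)" using pjr that Lt by (simp add: algebra_simps)
            then show ?thesis using blk[of j s] blk[of "j+t" s] j2t that by simp
          qed
          have pre: "us!(j+t)!s = us!(j+2*t)!s" if "s < r" for s
          proof -
            have tn: "n \<le> t*n" using t1 by simp
            have A: "U!(p + (t*n+s-r)) = U!(p+L+(t*n+s-r))" by (rule eq) (use that tn rn Lt in linarith)
            have e1: "(j+t)*n = j*n + t*n" and e2: "(j+2*t)*n = j*n + t*n + t*n"
              by (simp_all add: algebra_simps)
            have i1: "p + (t*n+s-r) = (j+t)*n+s" using pjr e1 tn rn by linarith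
            have i2: "p+L+(t*n+s-r) = (j+2*t)*n+s" using pjr e2 Lt tn rn by linarith
            have "U!((j+t)*n+s) = U!((j+2*t)*n+s)" using A unfolding i1 i2 .
            then show ?thesis using blk[of "j+t" s] blk[of "j+2*t" s] j2t that rn by simp
          qed
          consider "w!j = w!(j+t)" | "w!(j+t) = w!(j+2*t)" | "w!j \<noteq> w!(j+t)" "w!(j+t) \<noteq> w!(j+2*t)"
            by blast
          then show False
          proof cases
            case 1
            have "sq_at w j t" unfolding sq_at_def
            proof (intro conjI allI impI)
              show "0 < t" using t1 by simp
              show "j + 2*t \<le> length w" using j2t m_def by simp
              fix q assume q: "q < t"
              show "w!(j+q) = w!(j+t+q)"
                using 1 mid[of q] q by (cases "q = 0") (auto simp: algebra_simps)
            qed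
            then show False using sfw sf_iff by blast
          next
            case 2
            have "sq_at w (j+1) t" unfolding sq_at_def
            proof (intro conjI allI impI)
              show "0 < t" using t1 by simp
              show "j + 1 + 2*t \<le> length w" using j2t m_def by simp
              fix q assume q: "q < t"
              show "w!(j+1+q) = w!(j+1+t+q)"
              proof (cases "q + 1 < t")
                case True then show ?thesis using mid[of "q+1"] by (simp add: algebra_simps)
              next
                case False
                then have "q + 1 = t" using q by simp
                then have a1: "j+1+q = j+t" and a2: "j+1+t+q = j+2*t" by linarith+
                show ?thesis unfolding a1 a2 using 2 .
              qed
            qed
            then show False using sfw sf_iff by blast
          next
            case 3
            define V where "V = us!j @ us!(j+t) @ us!(j+2*t)"
            have "square_free V" unfolding V_def
              using T3[of "w!j" "w!(j+t)" "w!(j+2*t)" "us!j" "us!(j+t)" "us!(j+2*t)"]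
                wl'[of j] wl'[of "j+t"] wl'[of "j+2*t"] 3 usB'[of j] usB'[of "j+t"] usB'[of "j+2*t"] j2t
              by simp
            have l1: "length (us!j) = n" "length (us!(j+t)) = n" "length (us!(j+2*t)) = n"
              using lusi j2t by auto
            have "sq_at V r n" unfolding sq_at_def
            proof (intro conjI allI impI)
              show "0 < n" using npos .
              show "r + 2*n \<le> length V" using l1 rn by (simp add: V_def)
              fix q assume q: "q < n"
              show "V!(r+q) = V!(r+n+q)"
              proof (cases "r + q < n")
                case True
                then show ?thesis using l1 suf[of "r+q"] by (simp add: V_def nth_append)
              next
                case False
                then show ?thesis using l1 pre[of "r+q-n"] q rn by (simp add: V_def nth_append)
              qed
            qed
            then show False using \<open>square_free V\<close> sf_iff by blast
          qed
        qed
      qed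
    qed
  qed
qed

end

lemma fekete:
  fixes b :: "nat \<Rightarrow> real"
  assumes sub: "\<And>p q. b (p+q) \<le> b p + b q" and nn: "\<And>N. 0 \<le> b N"
  shows "(\<lambda>N. b N / real N) \<longlonglongrightarrow> (INF N\<in>{1..}. b N / real N)"
proof -
  define f where "f N = b N / real N" for N
  define l where "l = (INF N\<in>{1..}. f N)"
  have bdd: "bdd_below (f ` {1..})" by (rule bdd_belowI[of _ 0]) (auto simp: f_def nn)
  have low: "l \<le> f N" if "1 \<le> N" for N unfolding l_def using bdd that by (intro cINF_lower) auto
  have mult: "b (q*M + r) \<le> real q * b M + b r" for q M r
  proof (induction q)
    case 0 then show ?case by simp
  next
    case (Suc q)
    have "b (Suc q * M + r) = b (M + (q*M + r))" by (simp add: algebra_simps)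
    also have "... \<le> b M + b (q*M + r)" by (rule sub)
    also have "... \<le> b M + (real q * b M + b r)" using Suc by simp
    finally show ?case by (simp add: algebra_simps)
  qed
  have "(\<lambda>N. f N) \<longlonglongrightarrow> l"
  proof (rule order_tendstoI)
    fix a assume "a < l"
    then show "eventually (\<lambda>N. a < f N) sequentially"
      using low by (intro eventually_sequentiallyI[of 1]) (auto intro: less_le_trans)
  next
    fix a assume al: "l < a"
    define e where "e = (a - l) / 2"
    have e0: "0 < e" using al by (simp add: e_def)
    have "l < l + e" using e0 by simp
    then obtain M where M1: "M \<in> {1..}" and fM: "f M < l + e"
      using cINF_less_iff[of "{1..}" f "l+e"] bdd unfolding l_def by auto
    have M0: "0 < M" using M1 by auto
    define C where "C = (\<Sum>r<M. b r)"
    have C: "b r \<le> C" if "r < M" for r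
      unfolding C_def using that nn by (intro member_le_sum) auto
    have C0: "0 \<le> C" unfolding C_def using nn by (intro sum_nonneg) auto
    obtain N0 :: nat where N0: "C / e < real N0" using reals_Archimedean2 by blast
    show "eventually (\<lambda>N. f N < a) sequentially"
    proof (rule eventually_sequentiallyI[of "max N0 1"])
      fix N assume N: "max N0 1 \<le> N"
      then have Npos: "0 < real N" by simp
      define q where "q = N div M"
      define r where "r = N mod M"
      have Nqr: "N = q*M + r" unfolding q_def r_def by simp
      have rM: "r < M" using M0 by (simp add: r_def)
      have bN: "b N \<le> real q * b M + C" using mult[of q M r] C[OF rM] Nqr by simp
      have qM: "real q * real M \<le> real N"
        using div_times_less_eq_dividend[of N M] unfolding q_def by (metis of_nat_le_iff of_nat_mult)
      have bMf: "b M = real M * f M" using M0 by (simp add: f_def)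
      have fM0: "0 \<le> f M" using nn by (simp add: f_def)
      have "real q * b M = (real q * real M) * f M" using bMf by simp
      also have "... \<le> real N * f M" using qM fM0 by (rule mult_right_mono)
      finally have "b N \<le> real N * f M + C" using bN by simp
      then have "f N \<le> f M + C / real N" using Npos by (simp add: f_def field_simps)
      moreover have "C / real N < e"
      proof -
        have "C < e * real N0" using N0 e0 by (simp add: field_simps)
        also have "... \<le> e * real N" using N e0 by simp
        finally show ?thesis using Npos by (simp add: field_simps)
      qed
      moreover have "a = l + 2*e" by (simp add: e_def field_simps)
      ultimately show "f N < a" using fM by linarith
    qed
  qed
  then show ?thesis unfolding f_def l_def by simp
qed

lemma finite_sq: "finite (sqfree_words N)"
  by (rule finite_subset[OF _ finite_lists_length_eq[of "{0,1,2::nat}" N]])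
     (auto simp: sqfree_words_def)

lemma submult: "card (sqfree_words (p+q)) \<le> card (sqfree_words p) * card (sqfree_words q)"
proof -
  have "card (sqfree_words (p+q)) \<le> card (sqfree_words p \<times> sqfree_words q)"
  proof (rule card_inj_on_le[where f = "\<lambda>w. (take p w, drop p w)"])
    show "inj_on (\<lambda>w. (take p w, drop p w)) (sqfree_words (p+q))"
      by (rule inj_onI) (metis append_take_drop_id prod.inject)
    show "(\<lambda>w. (take p w, drop p w)) ` sqfree_words (p+q) \<subseteq> sqfree_words p \<times> sqfree_words q"
      by (auto simp: sqfree_words_def sf_take sf_drop dest: in_set_takeD in_set_dropD)
    show "finite (sqfree_words p \<times> sqfree_words q)" using finite_sq by simp
  qed
  then show ?thesis by (simp add: card_cartesian_product)
qed

lemma sq_ne_mono: "sqfree_words M \<noteq> {} \<Longrightarrow> N \<le> M \<Longrightarrow> sqfree_words N \<noteq> {}"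
proof -
  assume "sqfree_words M \<noteq> {}" "N \<le> M"
  then obtain w where w: "w \<in> sqfree_words M" by blast
  then have "take N w \<in> sqfree_words N" using \<open>N \<le> M\<close>
    by (auto simp: sqfree_words_def sf_take dest: in_set_takeD)
  then show ?thesis by blast
qed

lemma sq1: "[0] \<in> sqfree_words 1"
  by (auto simp: sqfree_words_def sf_iff sq_at_def)

context good
begin

lemma count:
  assumes k0: "\<And>a. a < 3 \<Longrightarrow> k0 \<le> card (B a)"
  shows "card (sqfree_words m) * k0^m \<le> card (sqfree_words (m*n))"
proof -
  have "\<forall>a. \<exists>h. a < 3 \<longrightarrow> inj_on h {0..<k0} \<and> h ` {0..<k0} \<subseteq> B a"
  proof
    fix a
    show "\<exists>h. a < 3 \<longrightarrow> inj_on h {0..<k0} \<and> h ` {0..<k0} \<subseteq> B a"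
    proof (cases "a < 3")
      case True
      obtain T where T: "T \<subseteq> B a" "card T = k0" "finite T"
        using obtain_subset_with_card_n[OF k0[OF True]] by blast
      obtain h where "bij_betw h {0..<card T} T" using ex_bij_betw_nat_finite[OF T(3)] by blast
      then have "inj_on h {0..<k0} \<and> h ` {0..<k0} \<subseteq> B a" using T by (auto simp: bij_betw_def)
      then show ?thesis by blast
    qed simp
  qed
  then obtain F where F: "\<And>a. a < 3 \<Longrightarrow> inj_on (F a) {0..<k0} \<and> F a ` {0..<k0} \<subseteq> B a"
    by metis
  define D where "D = sqfree_words m \<times> {js. set js \<subseteq> {0..<k0} \<and> length js = m}"
  define blocks where "blocks = (\<lambda>(w::nat list, js::nat list). map (\<lambda>i. F (w!i) (js!i)) [0..<length w])"
  define \<Phi> where "\<Phi> = (\<lambda>x. concat (blocks x))"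
  have cardD: "card D = card (sqfree_words m) * k0^m"
    unfolding D_def by (simp add: card_cartesian_product card_lists_length_eq)
  have inD: "length w = m \<and> square_free w \<and> (\<forall>i<m. w!i < 3) \<and> length js = m \<and> (\<forall>i<m. js!i < k0)"
    if "(w, js) \<in> D" for w js
  proof -
    have "set w \<subseteq> {0,1,2}" "length w = m" "square_free w" "set js \<subseteq> {0..<k0}" "length js = m"
      using that by (auto simp: D_def sqfree_words_def)
    moreover have "w!i < 3" if "i < m" for i
    proof -
      have "w!i \<in> {0,1,2}" using nth_mem[of i w] that \<open>set w \<subseteq> {0,1,2}\<close> \<open>length w = m\<close> by blast
      then show ?thesis by auto
    qed
    moreover have "js!i < k0" if "i < m" for i
    proof -
      have "js!i \<in> {0..<k0}" using nth_mem[of i js] that \<open>set js \<subseteq> {0..<k0}\<close> \<open>length js = m\<close> by blast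
      then show ?thesis by auto
    qed
    ultimately show ?thesis by blast
  qed
  have bl: "length (blocks (w,js)) = m \<and> (\<forall>i<m. blocks (w,js) ! i \<in> B (w!i))" if "(w, js) \<in> D" for w js
  proof -
    have "F (w!i) (js!i) \<in> B (w!i)" if "i < m" for i
      using F[of "w!i"] inD[OF \<open>(w, js) \<in> D\<close>] that by auto
    then show ?thesis using inD[OF that] by (simp add: blocks_def)
  qed
  have bllen: "\<forall>u\<in>set (blocks (w,js)). length u = n" if wj: "(w, js) \<in> D" for w js
  proof
    fix u assume "u \<in> set (blocks (w,js))"
    then obtain i where "i < m" "u = blocks (w,js) ! i" using bl[OF wj] by (auto simp: in_set_conv_nth)
    then show "length u = n" using bl[OF wj] inD[OF wj] lenB by blast
  qed
  have "card D \<le> card (sqfree_words (m*n))"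
  proof (rule card_inj_on_le[where f = \<Phi>])
    show "finite (sqfree_words (m*n))" by (rule finite_sq)
    show "\<Phi> ` D \<subseteq> sqfree_words (m*n)"
    proof
      fix x assume "x \<in> \<Phi> ` D"
      then obtain w js where wj: "(w,js) \<in> D" and x: "x = \<Phi> (w,js)" by auto
      have l: "length x = m*n" unfolding x \<Phi>_def using concat_len[OF bllen[OF wj]] bl[OF wj] by simp
      have "set x \<subseteq> {0,1,2}"
      proof
        fix c assume "c \<in> set x"
        then obtain u where u: "u \<in> set (blocks (w,js))" "c \<in> set u" unfolding x \<Phi>_def by auto
        then obtain i where "i < m" "u = blocks (w,js) ! i" using bl[OF wj] by (auto simp: in_set_conv_nth)
        then show "c \<in> {0,1,2}" using bl[OF wj] inD[OF wj] setB u(2) by blast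
      qed
      moreover have "square_free x" unfolding x \<Phi>_def
        by (rule main[of w]) (use inD[OF wj] bl[OF wj] in auto)
      ultimately show "x \<in> sqfree_words (m*n)" using l by (simp add: sqfree_words_def)
    qed
    show "inj_on \<Phi> D"
    proof (rule inj_onI)
      fix x y assume x: "x \<in> D" and y: "y \<in> D" and e: "\<Phi> x = \<Phi> y"
      obtain w js where xw: "x = (w,js)" by (cases x)
      obtain w' js' where yw: "y = (w',js')" by (cases y)
      note ix = inD[OF x[unfolded xw]] and iy = inD[OF y[unfolded yw]]
      note bx = bl[OF x[unfolded xw]] and by' = bl[OF y[unfolded yw]]
      have beq: "blocks (w,js) ! i = blocks (w',js') ! i" if i: "i < m" for i
      proof (rule nth_equalityI)
        have l1: "length (blocks (w,js) ! i) = n" using bx ix lenB i by blast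
        have l2: "length (blocks (w',js') ! i) = n" using by' iy lenB i by blast
        show "length (blocks (w,js) ! i) = length (blocks (w',js') ! i)" using l1 l2 by simp
        fix s assume "s < length (blocks (w,js) ! i)"
        then have s: "s < n" using l1 by simp
        have "blocks (w,js) ! i ! s = concat (blocks (w,js)) ! (i*n+s)"
          using concat_nth[OF bllen[OF x[unfolded xw]], of i s] bx i s by simp
        also have "... = concat (blocks (w',js')) ! (i*n+s)" using e xw yw by (simp add: \<Phi>_def)
        also have "... = blocks (w',js') ! i ! s"
          using concat_nth[OF bllen[OF y[unfolded yw]], of i s] by' i s by simp
        finally show "blocks (w,js) ! i ! s = blocks (w',js') ! i ! s" .
      qed
      have wq: "w!i = w'!i \<and> js!i = js'!i" if i: "i < m" for i
      proof -
        have b1: "F (w!i) (js!i) = F (w'!i) (js'!i)" using beq[OF i] ix iy i by (simp add: blocks_def)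
        have "F (w!i) (js!i) \<in> B (w!i)" "F (w'!i) (js'!i) \<in> B (w'!i)"
          using bx by' ix iy i by (auto simp: blocks_def)
        then have "w!i = w'!i" using disj ix iy i b1 by metis
        moreover have "js!i = js'!i"
          using F[of "w!i"] b1 ix iy i calculation by (auto simp: inj_on_def)
        ultimately show ?thesis by simp
      qed
      have "w = w'" by (rule nth_equalityI) (use ix iy wq in auto)
      moreover have "js = js'" by (rule nth_equalityI) (use ix iy wq in auto)
      ultimately show "x = y" using xw yw by simp
    qed
  qed
  then show ?thesis using cardD by simp
qed

end

lemma growth:
  fixes n k0 :: nat
  assumes n2: "2 \<le> n" and k1: "1 \<le> k0"
    and cnt: "\<And>m. card (sqfree_words m) * k0^m \<le> card (sqfree_words (m*n))"
    and ne: "\<And>N. sqfree_words N \<noteq> {}"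
  shows "1 \<le> growth_s \<and> real k0 powr (1/(real n - 1)) \<le> growth_s"
proof -
  define a where "a N = card (sqfree_words N)" for N
  have a1: "1 \<le> a N" for N
  proof -
    have "0 < card (sqfree_words N)" using ne[of N] finite_sq[of N] card_gt_0_iff by blast
    then show ?thesis by (simp add: a_def)
  qed
  have ap: "0 < real (a N)" for N using a1[of N] by simp
  define b where "b N = ln (real (a N))" for N
  have bnn: "0 \<le> b N" for N using a1[of N] by (simp add: b_def)
  have bsub: "b (p+q) \<le> b p + b q" for p q
  proof -
    have "real (a (p+q)) \<le> real (a p) * real (a q)"
      using submult[of p q] unfolding a_def by (metis of_nat_le_iff of_nat_mult)
    then have "ln (real (a (p+q))) \<le> ln (real (a p) * real (a q))"
      using ap by (subst ln_le_cancel_iff) auto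
    also have "... = b p + b q" using ap by (simp add: ln_mult b_def)
    finally show ?thesis by (simp add: b_def)
  qed
  define l where "l = (INF N\<in>{1..}. b N / real N)"
  have lim: "(\<lambda>N. b N / real N) \<longlonglongrightarrow> l" unfolding l_def by (rule fekete[OF bsub bnn])
  have l0: "0 \<le> l" unfolding l_def by (rule cINF_greatest) (auto simp: bnn)
  have fe: "real (a_count N) powr (1/real N) = exp (b N / real N)" for N
    using ap[of N] by (simp add: powr_def a_count_def a_def b_def)
  have "(\<lambda>N. real (a_count N) powr (1/real N)) \<longlonglongrightarrow> exp l"
    unfolding fe by (rule tendsto_exp[OF lim])
  then have gs: "growth_s = exp l" unfolding growth_s_def by (rule limI)
  have n0: "0 < n" using n2 by simp
  have smono: "strict_mono (\<lambda>m::nat. m*n)" by (rule strict_monoI) (simp add: n0)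
  have sub: "(\<lambda>m. b (m*n) / real (m*n)) \<longlonglongrightarrow> l"
    using LIMSEQ_subseq_LIMSEQ[OF lim smono] by (simp add: o_def)
  have h: "(\<lambda>m. (b m / real m + ln (real k0)) / real n) \<longlonglongrightarrow> (l + ln (real k0)) / real n"
    using n2 by (auto intro!: tendsto_intros lim)
  have ev: "eventually (\<lambda>m. (b m / real m + ln (real k0)) / real n \<le> b (m*n) / real (m*n)) sequentially"
  proof (rule eventually_sequentiallyI[of 1])
    fix m :: nat assume m1: "1 \<le> m"
    have k0p: "0 < real k0" using k1 by simp
    have "real (a m) * real k0 ^ m \<le> real (a (m*n))"
      using cnt[of m] unfolding a_def by (metis of_nat_le_iff of_nat_mult of_nat_power)
    then have "ln (real (a m) * real k0 ^ m) \<le> ln (real (a (m*n)))"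
      using ap k0p by (subst ln_le_cancel_iff) auto
    then have "b m + real m * ln (real k0) \<le> b (m*n)"
      using ap k0p by (simp add: ln_mult ln_realpow b_def)
    moreover have "0 < real m * real n" using m1 n0 by simp
    ultimately have "(b m + real m * ln (real k0)) / (real m * real n) \<le> b (m*n) / (real m * real n)"
      by (intro divide_right_mono) auto
    moreover have "(b m + real m * ln (real k0)) / (real m * real n) = (b m / real m + ln (real k0)) / real n"
      using m1 n0 by (simp add: field_simps)
    ultimately show "(b m / real m + ln (real k0)) / real n \<le> b (m*n) / real (m*n)" by simp
  qed
  have "(l + ln (real k0)) / real n \<le> l"
    by (rule tendsto_le[OF trivial_limit_sequentially sub h ev])
  then have "l + ln (real k0) \<le> l * real n" using n0 by (simp add: field_simps)
  then have "ln (real k0) \<le> l * (real n - 1)" by (simp add: algebra_simps)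
  moreover have nm1: "0 < real n - 1" using n2 by simp
  ultimately have "ln (real k0) / (real n - 1) \<le> l" by (simp add: field_simps)
  then have "exp (1/(real n - 1) * ln (real k0)) \<le> exp l" by simp
  moreover have "real k0 powr (1/(real n - 1)) = exp (1/(real n - 1) * ln (real k0))"
    using k1 by (simp add: powr_def)
  moreover have "1 \<le> exp l" using l0 by simp
  ultimately show ?thesis using gs by simp
qed

context good
begin

lemma nonempty_all:
  assumes n2: "2 \<le> n" and k1: "1 \<le> k0" and k0: "\<And>a. a < 3 \<Longrightarrow> k0 \<le> card (B a)"
  shows "sqfree_words N \<noteq> {}"
proof -
  have pw: "sqfree_words (n^e) \<noteq> {}" for e
  proof (induction e)
    case 0 then show ?case using sq1 by auto
  next
    case (Suc e)
    have "1 \<le> card (sqfree_words (n^e))"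
      using Suc finite_sq[of "n^e"] by (simp add: Suc_le_eq card_gt_0_iff)
    also have "... \<le> card (sqfree_words (n^e)) * k0^(n^e)" using k1 by simp
    also have "... \<le> card (sqfree_words (n^e * n))" by (rule count[OF k0])
    finally show ?case by (auto simp: mult.commute)
  qed
  have "N < 2^N" by (rule less_exp)
  also have "... \<le> n^N" using n2 by (simp add: power_mono)
  finally show ?thesis using sq_ne_mono[OF pw[of N]] by simp
qed

end

lemma leech_good: "good 13 (\<lambda>i. {leech i})"
proof
  show "0 < (13::nat)" by simp
next
  fix a :: nat assume a: "a < 3"
  then have "a = 0 \<or> a = 1 \<or> a = 2" by auto
  then have "length (leech a) = 13 \<and> set (leech a) \<subseteq> {0,1,2} \<and> sqf_rec (leech a)"
    by (auto simp: leech_def)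
  then show "{leech a} \<subseteq> sqfree_words 13" by (auto simp: sqfree_words_def intro: sqf_rec_sound)
next
  fix a :: nat assume "a < 3"
  show "{leech a} \<noteq> {}" by simp
next
  fix a b c :: nat and u v x
  assume h: "a < 3" "b < 3" "c < 3" "a \<noteq> b" "b \<noteq> c" "u \<in> {leech a}" "v \<in> {leech b}" "x \<in> {leech c}"
  have "a \<in> {0,1,2}" "b \<in> {0,1,2}" "c \<in> {0,1,2}" using h by auto
  then have "sqf_rec (leech a @ leech b @ leech c)" using leech_check h(4,5) by blast
  then show "square_free (u @ v @ x)" using h(6-8) by (simp add: sqf_rec_sound)
qed

lemma growth_ge_1: "1 \<le> growth_s"
proof -
  interpret good 13 "\<lambda>i. {leech i}" by (rule leech_good)
  have k0: "1 \<le> card {leech a}" for a by simp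
  have "\<And>m. card (sqfree_words m) * 1^m \<le> card (sqfree_words (m*13))"
    by (rule count) simp
  moreover have "\<And>N. sqfree_words N \<noteq> {}" by (rule nonempty_all[of 1]) auto
  ultimately show ?thesis using growth[of 13 1] by simp
qed

theorem lemma2:
  fixes n :: nat and k :: "nat \<Rightarrow> nat" and B :: "nat \<Rightarrow> nat list set"
  assumes "brinkhuis_triple n k B"
  shows "growth_s \<ge> real (min (k 0) (min (k 1) (k 2))) powr (1 / (real n - 1))"
proof -
  have H1: "\<And>i. i < 3 \<Longrightarrow> 1 \<le> k i \<and> B i \<subseteq> sqfree_words n \<and> card (B i) = k i"
    and H2: "\<And>i i' i''. [i, i', i''] \<in> sqfree_words 3 \<Longrightarrow>
        (\<forall>u\<in>B i. \<forall>v\<in>B i'. \<forall>w\<in>B i''. square_free (u @ v @ w))"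
    using assms unfolding brinkhuis_triple_def by blast+
  define k0 where "k0 = min (k 0) (min (k 1) (k 2))"
  have k0le: "k0 \<le> card (B a)" if "a < 3" for a
  proof -
    have "a = 0 \<or> a = 1 \<or> a = 2" using that by auto
    then show ?thesis using H1[of 0] H1[of 1] H1[of 2] by (auto simp: k0_def)
  qed
  have k01: "1 \<le> k0" using H1[of 0] H1[of 1] H1[of 2] by (simp add: k0_def)
  show ?thesis
  proof (cases "2 \<le> n")
    case True
    interpret good n B
    proof
      show "0 < n" using True by simp
      show "\<And>a. a < 3 \<Longrightarrow> B a \<subseteq> sqfree_words n" using H1 by blast
      show "\<And>a. a < 3 \<Longrightarrow> B a \<noteq> {}"
      proof -
        fix a :: nat assume "a < 3"
        then have "1 \<le> card (B a)" using H1 by auto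
        then show "B a \<noteq> {}" by auto
      qed
      fix a b c :: nat and u v x
      assume "a < 3" "b < 3" "c < 3" "a \<noteq> b" "b \<noteq> c" "u \<in> B a" "v \<in> B b" "x \<in> B c"
      then show "square_free (u @ v @ x)" using H2[OF sf3] by blast
    qed
    have cnt: "\<And>m. card (sqfree_words m) * k0^m \<le> card (sqfree_words (m*n))"
      by (rule count) (rule k0le)
    have ne: "\<And>N. sqfree_words N \<noteq> {}" by (rule nonempty_all[OF True k01 k0le])
    show ?thesis using growth[OF True k01 cnt ne] by (simp add: k0_def)
  next
    case False
    then have "n = 0 \<or> n = 1" by auto
    then have "real k0 powr (1 / (real n - 1)) = 1"
    proof
      assume n0: "n = 0"
      have "sqfree_words 0 = {[]}" by (auto simp: sqfree_words_def sf_iff sq_at_def)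
      have "k i \<le> 1" if "i < 3" for i
      proof -
        have "B i \<subseteq> {[]}" using H1[OF that] n0 \<open>sqfree_words 0 = {[]}\<close> by simp
        then have "card (B i) \<le> card {[]::nat list}" by (intro card_mono) auto
        then show ?thesis using H1[OF that] by simp
      qed
      then have "k 0 \<le> 1" by simp
      then have "k0 \<le> 1" by (simp add: k0_def)
      then have "k0 = 1" using k01 by simp
      then show ?thesis by simp
    next
      assume "n = 1"
      then show ?thesis using k01 by simp
    qed
    then show ?thesis using growth_ge_1 by (simp add: k0_def)
  qed
qed

end
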